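(* Let $\{r_n\}_{n\ge1}$ be a sequence of positive odd integers. For every $n\in\mathbb{N}$, $$\mathcal{L}\left(\{x\in\mathbb{I}\colon y_1(x)\le\tfrac{1}{r_1},\ y_2(x)\le\tfrac1{r_2},\dots,y_n(x)\le\tfrac1{r_n}\}\right)=\frac{1}{r_1r_2\cdots r_n}.$$
   Context: $\mathcal{L}$ is Lebesgue measure, $\mathbb{I}=(0,1)\setminus\mathbb{Q}$. Define $T\colon[0,1)\to[0,1)$ by: for $k\in\mathbb{N}$, $Tx=\lceil 1/x\rceil x-1$ if $x\in(\frac{1}{2k},\frac{1}{2k-1})$; $Tx=1-\lfloor 1/x\rfloor x$ if $x\in(\frac{1}{2k+1},\frac{1}{2k})$; $Tx=0$ if $x\in\{0\}\cup\{1/n\colon n\ge 2\}$. For $x\in(0,1)$ define $d_1(x)=\lceil 1/x\rceil$, $s_1(x)=1$ if $x\in[\frac{1}{2k},\frac{1}{2k-1})$ for some $k$, and $d_1(x)=\lfloor 1/x\rfloor$, $s_1(x)=-1$ if $x\in[\frac{1}{2k+1},\frac{1}{2k})$ for some $k$; $d_{n+1}(x)=d_1(T^nx)$, $s_{n+1}(x)=s_1(T^nx)$, $\epsilon_1(x)=1$, $\epsilon_{n+1}(x)=\prod_{k=1}^ns_k(x)$. For $x\in\mathbb{I}$ define $y_1(x)=x$ and, for $n\ge2$, $y_n(x)=(d_{n-1}(x)-1)T^{n-1}x$ if $\epsilon_n(x)=\epsilon_{n-1}(x)$, and $y_n(x)=(d_{n-1}(x)+1)T^{n-1}x$ if $\epsilon_n(x)=-\epsilon_{n-1}(x)$.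 *)

theory Defs
  imports "HOL-Analysis.Analysis"
begin

definition Irr :: "real set" where
  "Irr = {0<..<1} - \<rat>"

definition TT :: "real \<Rightarrow> real" where
  "TT x = (if x = 0 \<or> (\<exists>n::nat. n \<ge> 2 \<and> x = 1 / real n) then 0
    else if (\<exists>k::nat. k \<ge> 1 \<and> x \<in> {1 / (2 * real k)<..<1 / (2 * real k - 1)})
      then of_int \<lceil>1 / x\<rceil> * x - 1
    else if (\<exists>k::nat. k \<ge> 1 \<and> x \<in> {1 / (2 * real k + 1)<..<1 / (2 * real k)})
      then 1 - of_int \<lfloor>1 / x\<rfloor> * x
    else 0)"

definition d1 :: "real \<Rightarrow> int" where
  "d1 x = (if (\<exists>k::nat. k \<ge> 1 \<and> x \<in> {1 / (2 * real k)..<1 / (2 * real k - 1)})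
      then \<lceil>1 / x\<rceil> else \<lfloor>1 / x\<rfloor>)"

definition s1 :: "real \<Rightarrow> int" where
  "s1 x = (if (\<exists>k::nat. k \<ge> 1 \<and> x \<in> {1 / (2 * real k)..<1 / (2 * real k - 1)})
      then 1 else -1)"

text \<open>Digits indexed from 1: dd n x = d_n(x), ss n x = s_n(x) for n \<ge> 1.\<close>
definition dd :: "nat \<Rightarrow> real \<Rightarrow> int" where
  "dd n x = d1 ((TT ^^ (n - 1)) x)"

definition ss :: "nat \<Rightarrow> real \<Rightarrow> int" where
  "ss n x = s1 ((TT ^^ (n - 1)) x)"

definition eps :: "nat \<Rightarrow> real \<Rightarrow> int" where
  "eps n x = (\<Prod>k\<in>{1..<n}. ss k x)"

definition yy :: "nat \<Rightarrow> real \<Rightarrow> real" where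
  "yy n x = (if n \<le> 1 then x
     else if eps n x = eps (n - 1) x
       then (of_int (dd (n - 1) x) - 1) * (TT ^^ (n - 1)) x
       else (of_int (dd (n - 1) x) + 1) * (TT ^^ (n - 1)) x)"

end

theory Submission
  imports Defs
begin

definition dm :: "nat \<Rightarrow> nat" where "dm m = (if odd m then m+1 else m)"
definition cm :: "nat \<Rightarrow> nat" where "cm m = (if odd m then m else m+1)"
definition sg :: "nat \<Rightarrow> int" where "sg m = (if odd m then 1 else -1)"

lemma Irr_inv: assumes "w \<in> Irr" shows "1/w \<notin> \<rat>" "0 < w" "w < 1" "w \<notin> \<rat>"
proof -
  show "w \<notin> \<rat>" "0 < w" "w < 1" using assms by (auto simp: Irr_def)
  show "1/w \<notin> \<rat>"
  proof
    assume "1/w \<in> \<rat>"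
    then have "1/(1/w) \<in> \<rat>" by (rule Rats_divide[OF Rats_1])
    then show False using \<open>w \<notin> \<rat>\<close> by simp
  qed
qed

lemma Irr_floor:
  assumes "w \<in> Irr"
  defines "m \<equiv> nat \<lfloor>1/w\<rfloor>"
  shows "m \<ge> 1" "real m < 1/w" "1/w < real m + 1" "of_int \<lfloor>1/w\<rfloor> = real m"
proof -
  note I = Irr_inv[OF assms(1)]
  have u1: "1/w > 1" using I by simp
  have fl: "\<lfloor>1/w\<rfloor> \<ge> 1" using u1 by simp
  have im: "int m = \<lfloor>1/w\<rfloor>" unfolding m_def using fl by linarith
  then show "of_int \<lfloor>1/w\<rfloor> = real m" by (metis of_int_of_nat_eq)
  moreover have "of_int \<lfloor>1/w\<rfloor> \<noteq> 1/w" using I(1) by (metis Rats_of_int)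
  ultimately show "real m < 1/w" "1/w < real m + 1"
    by (metis of_int_floor_le order_le_neq_trans, metis real_of_int_floor_add_one_gt)
  show "m \<ge> 1" using im fl by linarith
qed

lemma interval_iff:
  assumes "w \<in> Irr" "j \<ge> 1"
  shows "w \<in> {1/(real j + 1)<..<1/real j} \<longleftrightarrow> nat \<lfloor>1/w\<rfloor> = j"
    and "w \<in> {1/(real j + 1)..<1/real j} \<longleftrightarrow> nat \<lfloor>1/w\<rfloor> = j"
proof -
  note I = Irr_inv[OF assms(1)]
  define m where "m = nat \<lfloor>1/w\<rfloor>"
  note F = Irr_floor[OF assms(1), folded m_def]
  have ne: "1/w \<noteq> real j + 1" using I(1) by (metis Rats_of_nat Rats_add Rats_1)
  have e1: "w \<in> {1/(real j + 1)<..<1/real j} \<longleftrightarrow> real j < 1/w \<and> 1/w < real j + 1"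
    using I(2) assms(2) by (auto simp: field_simps)
  have e2: "w \<in> {1/(real j + 1)..<1/real j} \<longleftrightarrow> real j < 1/w \<and> 1/w \<le> real j + 1"
    using I(2) assms(2) by (auto simp: field_simps)
  have e3: "real j < 1/w \<and> 1/w < real j + 1 \<longleftrightarrow> m = j"
  proof
    assume "real j < 1/w \<and> 1/w < real j + 1"
    then have "real j < real m + 1" "real m < real j + 1" using F by linarith+
    then show "m = j" by linarith
  next
    assume "m = j" then show "real j < 1/w \<and> 1/w < real j + 1" using F by auto
  qed
  show "w \<in> {1/(real j + 1)<..<1/real j} \<longleftrightarrow> nat \<lfloor>1/w\<rfloor> = j" using e1 e3 m_def by simp
  show "w \<in> {1/(real j + 1)..<1/real j} \<longleftrightarrow> nat \<lfloor>1/w\<rfloor> = j" using e2 e3 ne m_def by auto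
qed

lemma ex_iff:
  assumes "w \<in> Irr"
  shows "(\<exists>k::nat. k \<ge> 1 \<and> w \<in> {1 / (2 * real k)..<1 / (2 * real k - 1)}) \<longleftrightarrow> odd (nat \<lfloor>1/w\<rfloor>)"
    and "(\<exists>k::nat. k \<ge> 1 \<and> w \<in> {1 / (2 * real k)<..<1 / (2 * real k - 1)}) \<longleftrightarrow> odd (nat \<lfloor>1/w\<rfloor>)"
    and "(\<exists>k::nat. k \<ge> 1 \<and> w \<in> {1 / (2 * real k + 1)<..<1 / (2 * real k)}) \<longleftrightarrow> even (nat \<lfloor>1/w\<rfloor>)"
proof -
  define m where "m = nat \<lfloor>1/w\<rfloor>"
  note F = Irr_floor[OF assms(1), folded m_def]
  have r1: "2 * real k - 1 = real (2*k-1)" "2 * real k = real (2*k-1) + 1" if "k \<ge> 1" for k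
    using that by (auto simp: of_nat_diff)
  have r2: "2 * real k + 1 = real (2*k) + 1" "2 * real k = real (2*k)" for k
    by auto
  show "(\<exists>k::nat. k \<ge> 1 \<and> w \<in> {1 / (2 * real k)..<1 / (2 * real k - 1)}) \<longleftrightarrow> odd (nat \<lfloor>1/w\<rfloor>)"
  proof
    assume "\<exists>k::nat. k \<ge> 1 \<and> w \<in> {1 / (2 * real k)..<1 / (2 * real k - 1)}"
    then obtain k where k: "k \<ge> 1" "w \<in> {1 / (2 * real k)..<1 / (2 * real k - 1)}" by blast
    then have "w \<in> {1/(real (2*k-1) + 1)..<1/real (2*k-1)}" using r1[OF k(1)] by metis
    then have "nat \<lfloor>1/w\<rfloor> = 2*k-1" using interval_iff(2)[OF assms, of "2*k-1"] k(1) by simp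
    then show "odd (nat \<lfloor>1/w\<rfloor>)" using k(1) by simp
  next
    assume o: "odd (nat \<lfloor>1/w\<rfloor>)"
    define k where "k = (m+1) div 2"
    have k: "k \<ge> 1" "m = 2*k-1" using o F(1) unfolding k_def m_def by (auto elim!: oddE)
    have "w \<in> {1/(real (2*k-1) + 1)..<1/real (2*k-1)}" using interval_iff(2)[OF assms, of "2*k-1"] k m_def by simp
    then show "\<exists>k::nat. k \<ge> 1 \<and> w \<in> {1 / (2 * real k)..<1 / (2 * real k - 1)}" using r1[OF k(1)] k(1) by metis
  qed
  show "(\<exists>k::nat. k \<ge> 1 \<and> w \<in> {1 / (2 * real k)<..<1 / (2 * real k - 1)}) \<longleftrightarrow> odd (nat \<lfloor>1/w\<rfloor>)"
  proof
    assume "\<exists>k::nat. k \<ge> 1 \<and> w \<in> {1 / (2 * real k)<..<1 / (2 * real k - 1)}"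
    then obtain k where k: "k \<ge> 1" "w \<in> {1 / (2 * real k)<..<1 / (2 * real k - 1)}" by blast
    then have "w \<in> {1/(real (2*k-1) + 1)<..<1/real (2*k-1)}" using r1[OF k(1)] by metis
    then have "nat \<lfloor>1/w\<rfloor> = 2*k-1" using interval_iff(1)[OF assms, of "2*k-1"] k(1) by simp
    then show "odd (nat \<lfloor>1/w\<rfloor>)" using k(1) by simp
  next
    assume o: "odd (nat \<lfloor>1/w\<rfloor>)"
    define k where "k = (m+1) div 2"
    have k: "k \<ge> 1" "m = 2*k-1" using o F(1) unfolding k_def m_def by (auto elim!: oddE)
    have "w \<in> {1/(real (2*k-1) + 1)<..<1/real (2*k-1)}" using interval_iff(1)[OF assms, of "2*k-1"] k m_def by simp
    then show "\<exists>k::nat. k \<ge> 1 \<and> w \<in> {1 / (2 * real k)<..<1 / (2 * real k - 1)}" using r1[OF k(1)] k(1) by metis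
  qed
  show "(\<exists>k::nat. k \<ge> 1 \<and> w \<in> {1 / (2 * real k + 1)<..<1 / (2 * real k)}) \<longleftrightarrow> even (nat \<lfloor>1/w\<rfloor>)"
  proof
    assume "\<exists>k::nat. k \<ge> 1 \<and> w \<in> {1 / (2 * real k + 1)<..<1 / (2 * real k)}"
    then obtain k where k: "k \<ge> 1" "w \<in> {1 / (2 * real k + 1)<..<1 / (2 * real k)}" by blast
    then have "w \<in> {1/(real (2*k) + 1)<..<1/real (2*k)}" using r2 by metis
    then have "nat \<lfloor>1/w\<rfloor> = 2*k" using interval_iff(1)[OF assms, of "2*k"] k(1) by simp
    then show "even (nat \<lfloor>1/w\<rfloor>)" by simp
  next
    assume o: "even (nat \<lfloor>1/w\<rfloor>)"
    define k where "k = m div 2"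
    have k: "k \<ge> 1" "m = 2*k" using o F(1) unfolding k_def m_def by (auto elim!: evenE)
    have "w \<in> {1/(real (2*k) + 1)<..<1/real (2*k)}" using interval_iff(1)[OF assms, of "2*k"] k m_def by simp
    then show "\<exists>k::nat. k \<ge> 1 \<and> w \<in> {1 / (2 * real k + 1)<..<1 / (2 * real k)}" using r2 k(1) by metis
  qed
qed


lemma Irr_notinv: "w \<in> Irr \<Longrightarrow> w \<noteq> 0 \<and> \<not>(\<exists>n::nat. n \<ge> 2 \<and> w = 1 / real n)"
  using Irr_inv[of w] by (auto simp: Rats_divide)

lemma branch:
  assumes "w \<in> Irr"
  defines "m \<equiv> nat \<lfloor>1/w\<rfloor>"
  shows "d1 w = int (dm m)" "s1 w = sg m" "TT w = of_int (sg m) * (real (dm m) * w - 1)"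
    "TT w \<in> Irr" "TT w < 1 / real (cm m)" "d1 w - s1 w = int (cm m)" "m \<ge> 1"
proof -
  note I = Irr_inv[OF assms(1)]
  note F = Irr_floor[OF assms(1), folded m_def]
  note E = ex_iff[OF assms(1), folded m_def]
  note N = Irr_notinv[OF assms(1)]
  show "m \<ge> 1" by (rule F(1))
  have ce: "odd m \<Longrightarrow> \<lceil>1/w\<rceil> = int m + 1"
    using F by (subst ceiling_eq_iff) auto
  have fe: "\<lfloor>1/w\<rfloor> = int m" using F(4) by simp
  show d: "d1 w = int (dm m)" using E ce fe unfolding d1_def dm_def by auto
  show s: "s1 w = sg m" using E unfolding s1_def sg_def by auto
  show T: "TT w = of_int (sg m) * (real (dm m) * w - 1)"
    using E ce fe N unfolding TT_def sg_def dm_def by auto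
  show "d1 w - s1 w = int (cm m)" using d s unfolding dm_def sg_def cm_def by auto
  have wi: "w \<in> {1/(real m + 1)<..<1/real m}" using interval_iff(1)[OF assms(1) F(1)] m_def by simp
  have b: "0 < TT w \<and> TT w < 1 / real (cm m)"
  proof (cases "odd m")
    case True
    then have "TT w = (real m + 1) * w - 1" using T by (simp add: sg_def dm_def)
    note T1 = this
    have a: "1 < (real m+1)*w" "real m * w < 1" using wi F(1) by (auto simp: field_simps)
    have "(real m + 1)*(real m*w) < (real m+1)*1" using a(2) by (intro mult_strict_left_mono) auto
    hence "real m * TT w < 1" unfolding T1 by (simp add: algebra_simps)
    hence "TT w < 1/real m" using F(1) by (simp add: pos_less_divide_eq mult.commute)
    then show ?thesis using True a(1) T1 by (simp add: cm_def)
  next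
    case False
    then have "TT w = 1 - real m * w" using T by (simp add: sg_def dm_def)
    note T1 = this
    have a: "1 < (real m+1)*w" "real m * w < 1" using wi F(1) by (auto simp: field_simps)
    have "real m * 1 < real m * ((real m + 1)*w)" using a(1) F(1) by (intro mult_strict_left_mono) auto
    hence "(real m + 1) * TT w < 1" unfolding T1 by (simp add: algebra_simps)
    hence "TT w < 1/(real m + 1)" by (simp add: pos_less_divide_eq mult.commute)
    then show ?thesis using False a(2) T1 by (simp add: cm_def add.commute)
  qed
  then show "TT w < 1 / real (cm m)" by simp
  have "cm m \<ge> 1" unfolding cm_def using F(1) by auto
  then have "1 / real (cm m) \<le> 1" by simp
  then have "TT w < 1" using b by linarith
  moreover have "TT w \<notin> \<rat>"
  proof
    assume "TT w \<in> \<rat>"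
    then have "(of_int (sg m) * TT w + 1) / real (dm m) \<in> \<rat>" by (intro Rats_divide Rats_add Rats_mult) auto
    moreover have "(of_int (sg m) * TT w + 1) / real (dm m) = w" using T F(1) by (auto simp: sg_def dm_def)
    ultimately show False using I by simp
  qed
  ultimately show "TT w \<in> Irr" using b by (auto simp: Irr_def)
qed

definition gg :: "nat \<Rightarrow> real \<Rightarrow> real" where
  "gg m v = (of_int (sg m) * v + 1) / real (dm m)"

lemma gg_props:
  assumes "m \<ge> 1" "v \<in> Irr" "v < 1 / real (cm m)"
  shows "gg m v \<in> Irr" "nat \<lfloor>1 / gg m v\<rfloor> = m" "TT (gg m v) = v"
proof -
  note I = Irr_inv[OF assms(2)]
  have wi: "gg m v \<in> {1/(real m + 1)<..<1/real m}"
  proof (cases "odd m")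
    case True
    then show ?thesis using assms I by (auto simp: gg_def sg_def dm_def cm_def field_simps)
  next
    case False
    then have g: "gg m v = (1 - v) / real m" by (simp add: gg_def sg_def dm_def)
    have v1: "v * (real m + 1) < 1" using assms(3) False by (simp add: cm_def pos_less_divide_eq add.commute)
    have "real m < (1 - v) * (real m + 1)" using v1 by (simp add: algebra_simps)
    then have "1/(real m + 1) < (1 - v) / real m" using assms(1) by (simp add: field_simps)
    moreover have "(1 - v) / real m < 1 / real m" using assms(1) I(2) by (simp add: divide_strict_right_mono)
    ultimately show ?thesis using g by simp
  qed
  have "gg m v \<notin> \<rat>"
  proof
    assume "gg m v \<in> \<rat>"
    then have "of_int (sg m) * (real (dm m) * gg m v - 1) \<in> \<rat>" by (intro Rats_diff Rats_mult) auto
    moreover have "of_int (sg m) * (real (dm m) * gg m v - 1) = v" using assms(1)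
      by (auto simp: gg_def sg_def dm_def)
    ultimately show False using I by simp
  qed
  moreover have "0 < gg m v" "gg m v < 1"
  proof -
    have w1: "1/(real m + 1) < gg m v" "gg m v < 1/real m" using wi by auto
    have "0 < 1/(real m+1)" by simp
    moreover have "1/real m \<le> 1" using assms(1) by simp
    ultimately show "0 < gg m v" "gg m v < 1" using w1 by linarith+
  qed
  ultimately show G: "gg m v \<in> Irr" by (auto simp: Irr_def)
  show fl: "nat \<lfloor>1 / gg m v\<rfloor> = m" using interval_iff(1)[OF G assms(1)] wi by simp
  show "TT (gg m v) = v" using branch(3)[OF G] unfolding fl using assms(1)
    by (auto simp: gg_def sg_def dm_def)
qed

lemma gg_inv:
  assumes "w \<in> Irr"
  shows "gg (nat \<lfloor>1/w\<rfloor>) (TT w) = w"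
  using branch(3,7)[OF assms] by (auto simp: gg_def sg_def dm_def)


fun Sset :: "nat \<Rightarrow> nat list \<Rightarrow> real set" where
  "Sset c [] = Irr \<inter> {0<..<1/real c}"
| "Sset c (a#rs) = {w \<in> Irr \<inter> {0<..<1/real c}. real c * w \<le> 1/real a \<and> TT w \<in> Sset (cm (nat \<lfloor>1/w\<rfloor>)) rs}"

lemma Sset_sub: "Sset c rs \<subseteq> Irr \<inter> {0<..<1/real c}"
  by (cases rs) auto

definition hh :: "real \<Rightarrow> real" where
  "hh z = real (cm (nat \<lfloor>1/z\<rfloor>)) * TT z"

lemma charS:
  assumes "w \<in> Irr" "0 < w" "w < 1/real c"
  shows "w \<in> Sset c (a#rs) \<longleftrightarrow> real c * w \<le> 1/real a \<and> (\<forall>j<length rs. hh ((TT^^j) w) \<le> 1/real (rs!j))"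
  using assms
proof (induction rs arbitrary: c w a)
  case Nil
  then show ?case using branch(4,5)[OF Nil(1)] Irr_inv[of "TT w"] by auto
next
  case (Cons b rs)
  define m where "m = nat \<lfloor>1/w\<rfloor>"
  have TI: "TT w \<in> Irr" "0 < TT w" "TT w < 1/real (cm m)" using branch(4,5)[OF Cons(2)] Irr_inv[of "TT w"] m_def by auto
  have "w \<in> Sset c (a#b#rs) \<longleftrightarrow> real c * w \<le> 1/real a \<and> TT w \<in> Sset (cm m) (b#rs)"
    using Cons(2-4) m_def by simp
  also have "\<dots> \<longleftrightarrow> real c * w \<le> 1/real a \<and> (real (cm m) * TT w \<le> 1/real b \<and> (\<forall>j<length rs. hh ((TT^^j) (TT w)) \<le> 1/real (rs!j)))"
    using Cons.IH[OF TI] by simp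
  also have "\<dots> \<longleftrightarrow> real c * w \<le> 1/real a \<and> (\<forall>j<length (b#rs). hh ((TT^^j) w) \<le> 1/real ((b#rs)!j))"
    by (simp add: All_less_Suc2 funpow_Suc_right hh_def m_def del: funpow.simps)
  finally show ?case .
qed

lemma affine_image_meas:
  fixes S :: "real set"
  assumes "r \<noteq> 0" "S \<in> sets lebesgue"
  shows "(\<lambda>x. r * x + d) ` S \<in> sets lebesgue"
proof -
  have M: "(\<lambda>x::real. - d / r + (\<Sum>j\<in>Basis. ((1/r) * (x \<bullet> j)) *\<^sub>R j)) \<in> lebesgue \<rightarrow>\<^sub>M lebesgue"
    using assms(1) by (intro lebesgue_affine_measurable) auto
  have e: "(\<lambda>x::real. - d / r + (\<Sum>j\<in>Basis. ((1/r) * (x \<bullet> j)) *\<^sub>R j)) = (\<lambda>x. (x - d) / r)"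
    by (auto simp: fun_eq_iff diff_divide_distrib)
  have "(\<lambda>x. r * x + d) ` S = (\<lambda>x. (x - d) / r) -` S \<inter> space lebesgue"
  proof (rule set_eqI, rule iffI)
    fix y assume "y \<in> (\<lambda>x. r * x + d) ` S"
    then obtain x where "x \<in> S" "y = r * x + d" by blast
    then show "y \<in> (\<lambda>x. (x - d) / r) -` S \<inter> space lebesgue" using assms(1) by simp
  next
    fix y assume "y \<in> (\<lambda>x. (x - d) / r) -` S \<inter> space lebesgue"
    then have "(y - d) / r \<in> S" by simp
    moreover have "y = r * ((y - d) / r) + d" using assms(1) by simp
    ultimately show "y \<in> (\<lambda>x. r * x + d) ` S" by blast
  qed
  then show ?thesis using measurable_sets[OF M[unfolded e] assms(2)] by simp
qed

lemma gg_eq: "gg m = (\<lambda>x. (of_int (sg m) / real (dm m)) *\<^sub>R x + 1 / real (dm m))"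
  by (auto simp: fun_eq_iff gg_def add_divide_distrib)

lemma dm_pos: "m \<ge> 1 \<Longrightarrow> dm m \<ge> 1" by (auto simp: dm_def)
lemma cm_odd: "odd (cm m)" by (auto simp: cm_def)
lemma dm_cm: "real (dm m) * real (cm m) = real m * (real m + 1)" by (auto simp: dm_def cm_def)

lemma gg_meas:
  assumes "m \<ge> 1" "S \<in> sets lebesgue"
  shows "gg m ` S \<in> sets lebesgue" "emeasure lebesgue (gg m ` S) = ennreal (1 / real (dm m)) * emeasure lebesgue S"
proof -
  have sg: "of_int (sg m) / real (dm m) \<noteq> 0" "\<bar>of_int (sg m) / real (dm m)\<bar> = 1 / real (dm m)"
    using dm_pos[OF assms(1)] by (auto simp: sg_def)
  show "gg m ` S \<in> sets lebesgue" using affine_image_meas[OF sg(1) assms(2), of "1 / real (dm m)"]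
    by (simp add: gg_eq)
  show "emeasure lebesgue (gg m ` S) = ennreal (1 / real (dm m)) * emeasure lebesgue S"
    unfolding gg_eq emeasure_lebesgue_affine sg(2) by simp
qed


lemma Sset_Nil_meas:
  assumes "c \<ge> 1"
  shows "Sset c [] \<in> sets lebesgue \<and> emeasure lebesgue (Sset c []) = ennreal (1 / real c)"
proof -
  have "1 / real c \<le> 1" using assms by simp
  then have e: "Sset c [] = {0<..<1/real c} - \<rat>" by (auto simp: Irr_def)
  have Q: "\<rat> \<in> null_sets lebesgue"
    using countable_imp_null_set_lborel[OF countable_rat] by (rule null_sets_completionI)
  have I: "{0<..<1/real c} \<in> sets lebesgue" by simp
  show ?thesis unfolding e
    using emeasure_Diff_null_set[OF Q I] Q I by auto
qed

lemma tele:
  assumes "N \<ge> 1" "P > 0"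
  shows "(\<Sum>j. ennreal (1 / (real (N+j) * (real (N+j) + 1) * P))) = ennreal (1 / (real N * P))"
proof (rule suminf_ennreal_eq)
  show "0 \<le> 1 / (real (N+j) * (real (N+j) + 1) * P)" for j using assms by simp
  have "(\<lambda>j. 1 / real (N+j)) \<longlonglongrightarrow> 0"
  proof -
    have "(\<lambda>j. 1 / real (j + N)) \<longlonglongrightarrow> 0"
      using LIMSEQ_ignore_initial_segment[OF lim_const_over_n[of 1], of N] by simp
    then show ?thesis by (simp add: add.commute)
  qed
  from telescope_sums'[OF this]
  have "(\<lambda>j. 1 / real (N+j) - 1 / real (N + Suc j)) sums (1 / real N)" by simp
  from sums_mult2[OF this, of "1/P"]
  have "(\<lambda>j. (1 / real (N+j) - 1 / real (N + Suc j)) * (1/P)) sums (1 / real N * (1/P))" .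
  moreover have "(1 / real (N+j) - 1 / real (N + Suc j)) * (1/P) = 1 / (real (N+j) * (real (N+j) + 1) * P)" for j
    using assms by (simp add: field_simps)
  ultimately show "(\<lambda>j. 1 / (real (N+j) * (real (N+j) + 1) * P)) sums (1 / (real N * P))" by simp
qed


lemma Smeas:
  "odd c \<Longrightarrow> (\<forall>a\<in>set rs. odd a) \<Longrightarrow>
   Sset c rs \<in> sets lebesgue \<and> emeasure lebesgue (Sset c rs) = ennreal (1 / (real c * prod_list (map real rs)))"
proof (induction rs arbitrary: c)
  case Nil
  then have "c \<ge> 1" by (cases c) auto
  then show ?case using Sset_Nil_meas[of c] by simp
next
  case (Cons a rs)
  define N where "N = c * a"
  define P where "P = prod_list (map real rs)"
  have c1: "c \<ge> 1" using Cons(2) by (cases c) auto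
  have a1: "a \<ge> 1" using Cons(3) by (cases a) auto
  have N1: "N \<ge> 1" using c1 a1 unfolding N_def by simp
  have P0: "P > 0" unfolding P_def using Cons(3)
    by (induction rs) (auto intro!: mult_pos_pos, metis odd_pos)
  define F where "F j = gg (N+j) ` Sset (cm (N+j)) rs" for j
  have IH: "Sset (cm m) rs \<in> sets lebesgue" "emeasure lebesgue (Sset (cm m) rs) = ennreal (1 / (real (cm m) * P))" for m
    using Cons.IH[of "cm m"] Cons(3) cm_odd P_def by auto
  have eq: "Sset c (a#rs) = (\<Union>j. F j)"
  proof (rule set_eqI, rule iffI)
    fix w assume w: "w \<in> Sset c (a#rs)"
    define m where "m = nat \<lfloor>1/w\<rfloor>"
    have wI: "w \<in> Irr" "real c * w \<le> 1 / real a" "TT w \<in> Sset (cm m) rs" using w m_def by auto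
    note F = Irr_floor[OF wI(1), folded m_def]
    have "w \<le> 1 / real N" using wI(2) c1 a1 by (simp add: N_def field_simps)
    then have "real N \<le> 1 / w" using Irr_inv[OF wI(1)] N1 by (simp add: field_simps)
    then have "int N \<le> \<lfloor>1/w\<rfloor>" by (simp add: le_floor_iff)
    then have "N \<le> m" unfolding m_def by (simp add: le_nat_iff)
    then have mN: "m = N + (m - N)" by simp
    have "w = gg m (TT w)" using gg_inv[OF wI(1)] m_def by simp
    then have "w \<in> F (m - N)" unfolding F_def using mN wI(3) by (metis image_eqI)
    then show "w \<in> (\<Union>j. F j)" by blast
  next
    fix w assume "w \<in> (\<Union>j. F j)"
    then obtain j v where v: "v \<in> Sset (cm (N+j)) rs" "w = gg (N+j) v" unfolding F_def by blast
    define m where "m = N + j"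
    have m1: "m \<ge> 1" using N1 m_def by simp
    have vI: "v \<in> Irr" "v < 1 / real (cm m)" using Sset_sub[of "cm (N+j)" rs] v(1) m_def by auto
    note G = gg_props[OF m1 vI]
    have wI: "w \<in> Irr" "nat \<lfloor>1/w\<rfloor> = m" "TT w = v" using G v(2) m_def by auto
    have "w < 1 / real m" using interval_iff(1)[OF wI(1) m1] wI(2) by simp
    also have "\<dots> \<le> 1 / real N" using m_def N1 by (simp add: frac_le)
    finally have wN: "w < 1 / real N" .
    have "real c * w \<le> 1 / real a" using wN c1 a1 by (simp add: N_def field_simps)
    moreover have "1 / real N \<le> 1 / real c" using c1 a1 N_def by (simp add: frac_le)
    ultimately show "w \<in> Sset c (a#rs)" using wI wN Irr_inv[OF wI(1)] v(1) m_def by auto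
  qed
  have Fm: "F j \<in> sets lebesgue" "emeasure lebesgue (F j) = ennreal (1 / (real (N+j) * (real (N+j) + 1) * P))" for j
  proof -
    have m1: "N + j \<ge> 1" using N1 by simp
    show "F j \<in> sets lebesgue" unfolding F_def using gg_meas(1)[OF m1 IH(1)] .
    have "emeasure lebesgue (F j) = ennreal (1 / real (dm (N+j))) * ennreal (1 / (real (cm (N+j)) * P))"
      unfolding F_def using gg_meas(2)[OF m1 IH(1)] IH(2) by simp
    also have "\<dots> = ennreal (1 / (real (dm (N+j)) * real (cm (N+j)) * P))"
      using P0 by (simp add: ennreal_mult[symmetric])
    also have "\<dots> = ennreal (1 / (real (N+j) * (real (N+j) + 1) * P))" by (simp only: dm_cm)
    finally show "emeasure lebesgue (F j) = ennreal (1 / (real (N+j) * (real (N+j) + 1) * P))" .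
  qed
  have disj: "disjoint_family F"
    unfolding disjoint_family_on_def
  proof (intro ballI impI)
    fix i j :: nat assume "i \<noteq> j"
    show "F i \<inter> F j = {}"
    proof (rule ccontr)
      assume "F i \<inter> F j \<noteq> {}"
      then obtain w where w: "w \<in> F i" "w \<in> F j" by blast
      have "nat \<lfloor>1/w\<rfloor> = N + k" if wk: "w \<in> F k" for k
      proof -
        obtain v where v: "v \<in> Sset (cm (N+k)) rs" "w = gg (N+k) v" using wk unfolding F_def by blast
        have vI: "v \<in> Irr" "v < 1 / real (cm (N+k))" using Sset_sub[of "cm (N+k)" rs] v(1) by auto
        show ?thesis using gg_props(2)[OF _ vI] N1 v(2) by simp
      qed
      note hk = this
      have "N + i = N + j" using hk[OF w(1)] hk[OF w(2)] by simp
      then show False using \<open>i \<noteq> j\<close> by simp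
    qed
  qed
  have "Sset c (a#rs) \<in> sets lebesgue" unfolding eq using Fm(1) by auto
  moreover have "emeasure lebesgue (Sset c (a#rs)) = (\<Sum>j. emeasure lebesgue (F j))"
  proof -
    have "range F \<subseteq> sets lebesgue" using Fm(1) by auto
    from suminf_emeasure[OF this disj] show ?thesis unfolding eq by simp
  qed
  moreover have "\<dots> = ennreal (1 / (real N * P))" unfolding Fm(2) using tele[OF N1 P0] .
  moreover have "real N * P = real c * prod_list (map real (a#rs))" unfolding N_def P_def by simp
  ultimately show ?case by simp
qed


lemma TT_iter_Irr: "x \<in> Irr \<Longrightarrow> (TT^^j) x \<in> Irr"
  by (induction j) (auto intro: branch(4))

lemma ss_pm: "ss k x = 1 \<or> ss k x = -1"
  by (simp add: ss_def s1_def)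

lemma eps_abs: "\<bar>eps n x\<bar> = 1"
proof -
  have "\<bar>eps n x\<bar> = (\<Prod>k\<in>{1..<n}. \<bar>ss k x\<bar>)" unfolding eps_def by (rule abs_prod)
  also have "\<dots> = 1" using ss_pm by (intro prod.neutral) (metis abs_1 abs_minus_cancel)
  finally show ?thesis .
qed

lemma eps_Suc: "eps (Suc (Suc j)) x = eps (Suc j) x * ss (Suc j) x"
  unfolding eps_def by (simp add: prod.atLeastLessThan_Suc)

lemma yy_Suc2:
  assumes "x \<in> Irr"
  shows "yy (Suc (Suc j)) x = hh ((TT^^j) x)"
proof -
  define z where "z = (TT^^j) x"
  have zI: "z \<in> Irr" using TT_iter_Irr[OF assms] z_def by simp
  have dd: "dd (Suc j) x = d1 z" and ss: "ss (Suc j) x = s1 z" unfolding dd_def ss_def z_def by simp_all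
  have T: "(TT ^^ (Suc (Suc j) - 1)) x = TT z" unfolding z_def by simp
  have ne: "eps (Suc j) x \<noteq> 0" using eps_abs[of "Suc j" x] by auto
  have ep: "eps (Suc (Suc j)) x = eps (Suc (Suc j) - 1) x \<longleftrightarrow> s1 z = 1"
    using eps_Suc[of j x] ne ss by simp
  have yy: "yy (Suc (Suc j)) x = of_int (d1 z - s1 z) * TT z"
    using ep dd T ss_pm[of "Suc j" x] unfolding ss yy_def
    by (auto simp: algebra_simps)
  show ?thesis unfolding yy z_def[symmetric] hh_def using branch(6)[OF zI] by simp
qed

theorem lemma3p6:
  fixes r :: "nat \<Rightarrow> nat" and n :: nat
  assumes "\<And>i. i \<ge> 1 \<Longrightarrow> r i > 0 \<and> odd (r i)"
    and "n \<ge> 1"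
  shows "emeasure lebesgue {x \<in> Irr. \<forall>i\<in>{1..n}. yy i x \<le> 1 / real (r i)}
           = ennreal (1 / (\<Prod>i\<in>{1..n}. real (r i)))"
proof -
  define rs where "rs = map r [Suc 1..<Suc n]"
  have u: "[1..<Suc n] = 1 # [Suc 1..<Suc n]" by (rule upt_conv_Cons) (use assms(2) in simp)
  have L: "map r [1..<Suc n] = r 1 # rs" unfolding rs_def by (simp only: u list.map)
  have len: "length rs = n - 1" unfolding rs_def by (simp only: length_map length_upt diff_Suc_Suc One_nat_def)
  have nth: "rs ! j = r (Suc (Suc j))" if "j < n - 1" for j
  proof -
    have "Suc 1 + j < Suc n" using that by simp
    then show ?thesis unfolding rs_def by (simp del: upt_Suc add: nth_upt)
  qed
  have odds: "\<forall>a\<in>set (map r [1..<Suc n]). odd a" using assms(1) by auto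
  have S: "{x \<in> Irr. \<forall>i\<in>{1..n}. yy i x \<le> 1 / real (r i)} = Sset 1 (map r [1..<Suc n])"
  proof (rule set_eqI)
    fix x
    show "x \<in> {x \<in> Irr. \<forall>i\<in>{1..n}. yy i x \<le> 1 / real (r i)} \<longleftrightarrow> x \<in> Sset 1 (map r [1..<Suc n])"
    proof (cases "x \<in> Irr")
      case False
      then show ?thesis using Sset_sub[of 1 "map r [1..<Suc n]"] by auto
    next
      case True
      note I = Irr_inv[OF True]
      have "x \<in> Sset 1 (map r [1..<Suc n]) \<longleftrightarrow> x \<le> 1 / real (r 1) \<and> (\<forall>j<n-1. hh ((TT^^j) x) \<le> 1 / real (r (Suc (Suc j))))"
        unfolding L using charS[OF True I(2), of 1 "r 1" rs] I(3) len nth by simp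
      also have "\<dots> \<longleftrightarrow> (\<forall>i\<in>{1..n}. yy i x \<le> 1 / real (r i))"
      proof
        assume h: "x \<le> 1 / real (r 1) \<and> (\<forall>j<n-1. hh ((TT^^j) x) \<le> 1 / real (r (Suc (Suc j))))"
        show "\<forall>i\<in>{1..n}. yy i x \<le> 1 / real (r i)"
        proof
          fix i assume i: "i \<in> {1..n}"
          show "yy i x \<le> 1 / real (r i)"
          proof (cases "i = 1")
            case True then show ?thesis using h by (simp add: yy_def)
          next
            case False
            then obtain j where j: "i = Suc (Suc j)" using i by (metis atLeastAtMost_iff le_Suc_ex Suc_eq_plus1 One_nat_def add.commute le_antisym not_less_eq_eq)
            then have "j < n - 1" using i by auto
            then show ?thesis using h j yy_Suc2[OF True] by simp
          qed
        qed
      next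
        assume h: "\<forall>i\<in>{1..n}. yy i x \<le> 1 / real (r i)"
        have "x \<le> 1 / real (r 1)" using h[rule_format, of 1] assms(2) by (simp add: yy_def)
        moreover have "hh ((TT^^j) x) \<le> 1 / real (r (Suc (Suc j)))" if "j < n - 1" for j
          using h[rule_format, of "Suc (Suc j)"] that yy_Suc2[OF True] by simp
        ultimately show "x \<le> 1 / real (r 1) \<and> (\<forall>j<n-1. hh ((TT^^j) x) \<le> 1 / real (r (Suc (Suc j))))" by blast
      qed
      finally show ?thesis using True by simp
    qed
  qed
  have P: "(\<Prod>i\<in>{1..n}. real (r i)) = prod_list (map real (map r [1..<Suc n]))"
  proof -
    have "(\<Prod>i\<in>{1..n}. real (r i)) = (\<Prod>i\<in>set [1..<Suc n]. real (r i))"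
      by (simp only: set_upt atLeastLessThanSuc_atLeastAtMost)
    also have "\<dots> = prod_list (map (\<lambda>i. real (r i)) [1..<Suc n])"
      by (rule prod.distinct_set_conv_list) simp
    finally show ?thesis by (simp add: comp_def)
  qed
  show ?thesis unfolding S P using Smeas[of 1 "map r [1..<Suc n]"] odds by simp
qed

end
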